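(* The part Dirichlet forms on $G$ coincide: $(\mathcal{E}^{(s)}_G,\mathcal{F}^{(s)}_G)=(\frac12\mathbf{D}_G,H^1_0(G))$. That is, $\mathcal{F}^{(s)}_G=H^1_0(G)$, where $H^1_0(G)=\{u\in H^1(\mathbf{R}): u=0 \text{ on } F\}$, and the two forms agree on this space.
   Context: Let $m$ be Lebesgue measure on $\mathbf{R}$, and let $(\mathcal{E},\mathcal{F})=(\frac12\mathbf{D},H^1(\mathbf{R}))$ with $\mathbf{D}(u,v)=\int u'v'\,dx$ be the Dirichlet form of one-dimensional Brownian motion on $L^2(\mathbf{R})$. Let $s$ be a strictly increasing absolutely continuous function on $\mathbf{R}$ with $s'\in\{0,1\}$ a.e. Define $\mathcal{F}^{(s)}=\{u\in L^2(\mathbf{R}): u\ll s,\ \int(du/ds)^2ds<\infty\}$ and $\mathcal{E}^{(s)}(u,v)=\frac12\int\frac{du}{ds}\frac{dv}{ds}ds$. Let $G=\{s'=1\}$ (so $ds=1_G\,dx$) and $F=\mathbf{R}\setminus G$. Assume $G$ is open, $m(F)>0$, and $F$ has no isolated points. The part form of $\mathcal{E}^{(s)}$ on $G$ is $\mathcal{F}^{(s)}_G=\{u\in\mathcal{F}^{(s)}: u=0 \text{ on } F\}$ with $\mathcal{E}^{(s)}_G=\mathcal{E}^{(s)}$ on it. Here $u=0$ on $F$ refers to the continuous version of $u$. Similarly $\frac12\mathbf{D}_G$ denotes $\frac12\mathbf{D}$ restricted to $H^1_0(G)$. *)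

theory Defs
  imports "HOL-Analysis.Analysis"
begin

text \<open>Functions are represented pointwise by real functions; all members of
  the spaces below are automatically continuous (they are indefinite integrals),
  so pointwise statements refer to the continuous version.\<close>

definition L2 :: "(real \<Rightarrow> real) \<Rightarrow> bool" where
  "L2 u \<longleftrightarrow> u \<in> borel_measurable lebesgue \<and> integrable lebesgue (\<lambda>x. (u x)\<^sup>2)"

definition weak_deriv :: "(real \<Rightarrow> real) \<Rightarrow> (real \<Rightarrow> real) \<Rightarrow> bool" where
  "weak_deriv u g \<longleftrightarrow> L2 g \<and>
     (\<forall>a b. a \<le> b \<longrightarrow> set_integrable lebesgue {a..b} g \<and>
        u b - u a = (LINT x:{a..b}|lebesgue. g x))"

definition H1 :: "(real \<Rightarrow> real) set" where
  "H1 = {u. L2 u \<and> (\<exists>g. weak_deriv u g)}"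

definition H10 :: "real set \<Rightarrow> (real \<Rightarrow> real) set" where
  "H10 G = {u \<in> H1. \<forall>x. x \<notin> G \<longrightarrow> u x = 0}"

definition Dform :: "(real \<Rightarrow> real) \<Rightarrow> (real \<Rightarrow> real) \<Rightarrow> real" where
  "Dform u v = (LINT x|lebesgue. (SOME g. weak_deriv u g) x * (SOME g. weak_deriv v g) x)"

definition s_deriv :: "(real \<Rightarrow> real) \<Rightarrow> (real \<Rightarrow> real) \<Rightarrow> (real \<Rightarrow> real) \<Rightarrow> bool" where
  "s_deriv s u g \<longleftrightarrow> g \<in> borel_measurable borel \<and>
     integrable (interval_measure s) (\<lambda>x. (g x)\<^sup>2) \<and>
     (\<forall>a b. a \<le> b \<longrightarrow> set_integrable (interval_measure s) {a<..b} g \<and>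
        u b - u a = (LINT x:{a<..b}|interval_measure s. g x))"

definition Fs :: "(real \<Rightarrow> real) \<Rightarrow> (real \<Rightarrow> real) set" where
  "Fs s = {u. L2 u \<and> (\<exists>g. s_deriv s u g)}"

definition Es :: "(real \<Rightarrow> real) \<Rightarrow> (real \<Rightarrow> real) \<Rightarrow> (real \<Rightarrow> real) \<Rightarrow> real" where
  "Es s u v = 1/2 * (LINT x|interval_measure s. (SOME g. s_deriv s u g) x * (SOME g. s_deriv s v g) x)"

definition Fs_part :: "(real \<Rightarrow> real) \<Rightarrow> real set \<Rightarrow> (real \<Rightarrow> real) set" where
  "Fs_part s G = {u \<in> Fs s. \<forall>x. x \<notin> G \<longrightarrow> u x = 0}"

end

theory Submission
  imports Defs
begin


lemma IM:
  fixes s :: "real \<Rightarrow> real" and G :: "real set"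
  assumes mono: "strict_mono s"
    and sG: "\<And>a b. a \<le> b \<Longrightarrow> s b - s a = measure lebesgue ({a..b} \<inter> G)"
    and G: "open G"
  shows "interval_measure s = density lborel (\<lambda>x. ennreal (indicator G x))"
proof -
  have Gb[measurable]: "G \<in> sets borel" using G by auto
  have lip: "\<bar>s y - s x\<bar> \<le> \<bar>y - x\<bar>" for x y
  proof -
    have *: "s b - s a \<le> b - a" if "a \<le> b" for a b
    proof -
      have "measure lebesgue ({a..b} \<inter> G) \<le> measure lebesgue {a..b}"
        by (intro measure_mono_fmeasurable) (auto intro: Gb)
      then show ?thesis using sG[OF that] that by simp
    qed
    have m: "a \<le> b \<Longrightarrow> s a \<le> s b" for a b using mono by (metis order_le_less strict_mono_less)
    show ?thesis using *[of x y] *[of y x] m[of x y] m[of y x] by (cases "x \<le> y") auto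
  qed
  have cont: "continuous (at_right a) s" for a
  proof -
    have "continuous_on UNIV s"
      by (rule lipschitz_on_continuous_on[of 1]) (auto simp: lipschitz_on_def dist_real_def lip)
    then show ?thesis by (simp add: continuous_on_eq_continuous_within continuous_at_imp_continuous_at_within)
  qed
  have monoS: "\<And>x y. x \<le> y \<Longrightarrow> s x \<le> s y" using mono by (metis order_le_less strict_mono_less)
  have Ioc: "emeasure (interval_measure s) {a<..b} = emeasure (density lborel (\<lambda>x. ennreal (indicator G x))) {a<..b}" for a b
  proof (cases "a \<le> b")
    case True
    have "emeasure (density lborel (\<lambda>x. ennreal (indicator G x))) {a<..b} = emeasure lborel ({a<..b} \<inter> G)"
      by (subst emeasure_density) (auto simp: nn_integral_indicator[symmetric] indicator_inter_arith ennreal_indicator intro!: nn_integral_cong split: split_indicator)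
    also have "\<dots> = emeasure lborel ({a..b} \<inter> G)"
    proof -
      have "emeasure lborel ({a..b} \<inter> G) = emeasure lborel ({a<..b} \<inter> G \<union> ({a} \<inter> G))"
        using True by (intro arg_cong[where f="emeasure lborel"]) auto
      also have "\<dots> = emeasure lborel ({a<..b} \<inter> G) + emeasure lborel ({a} \<inter> G)"
        by (intro plus_emeasure[symmetric]) auto
      also have "emeasure lborel ({a} \<inter> G) = 0"
        using emeasure_mono[of "{a} \<inter> G" "{a}" lborel] by simp
      finally show ?thesis by simp
    qed
    also have "\<dots> = ennreal (measure lebesgue ({a..b} \<inter> G))"
    proof -
      have "emeasure lborel ({a..b} \<inter> G) \<le> emeasure lborel {a..b}" by (intro emeasure_mono) auto
      then have "emeasure lborel ({a..b} \<inter> G) < \<infinity>" using True by (simp add: le_less_trans)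
      then show ?thesis
        by (simp add: emeasure_eq_ennreal_measure measure_completion less_top)
    qed
    also have "\<dots> = emeasure (interval_measure s) {a<..b}"
      using emeasure_interval_measure_Ioc[OF True monoS cont] sG[OF True] by simp
    finally show ?thesis by simp
  next
    case False then show ?thesis by simp
  qed
  show ?thesis
  proof (rule measure_eqI_generator_eq_countable[of "range (\<lambda>(a, b). {a<..b::real})" UNIV _ _ "range (\<lambda>n::nat. {-real n<..real n})"])
    show "Int_stable (range (\<lambda>(a, b). {a<..b::real}))"
      by (auto simp: Int_stable_def image_iff intro!: exI[of _ "(max _ _, min _ _)"])
    show "sets (interval_measure s) = sigma_sets UNIV (range (\<lambda>(a, b). {a<..b}))"
      using arg_cong[OF borel_sigma_sets_Ioc, of sets] by simp
    show "sets (density lborel (\<lambda>x. ennreal (indicator G x))) = sigma_sets UNIV (range (\<lambda>(a, b). {a<..b}))"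
      using arg_cong[OF borel_sigma_sets_Ioc, of sets] by simp
    show "\<And>X. X \<in> range (\<lambda>(a, b). {a<..b}) \<Longrightarrow> emeasure (interval_measure s) X = emeasure (density lborel (\<lambda>x. ennreal (indicator G x))) X"
      using Ioc by auto
    show "range (\<lambda>n::nat. {-real n<..real n}) \<subseteq> range (\<lambda>(a, b). {a<..b})" by auto
    show "\<Union> (range (\<lambda>n::nat. {-real n<..real n})) = UNIV"
      by (auto, metis gt_ex le_less_trans minus_less_iff real_arch_simple less_le_not_le order.strict_trans2 abs_less_iff abs_ge_self)
    show "countable (range (\<lambda>n::nat. {-real n<..real n}))" by auto
    show "\<And>a. a \<in> range (\<lambda>n::nat. {-real n<..real n}) \<Longrightarrow> emeasure (interval_measure s) a \<noteq> \<infinity>"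
      using emeasure_interval_measure_Ioc[OF _ monoS cont] by auto
  qed auto
qed


lemma U:
  fixes f :: "real \<Rightarrow> real"
  assumes f[measurable]: "f \<in> borel_measurable borel"
    and int: "\<And>a b. a \<le> b \<Longrightarrow> set_integrable lborel {a..b} f"
    and z: "\<And>a b. a \<le> b \<Longrightarrow> (LINT x:{a..b}|lborel. f x) = 0"
  shows "AE x in lborel. f x = 0"
proof -
  have AEn: "AE x in lborel. indicator {-real n..real n} x * f x = 0" for n :: nat
  proof -
    define h where "h x = indicator {-real n..real n} x * f x" for x
    have hm[measurable]: "h \<in> borel_measurable borel" unfolding h_def by measurable
    have hi: "integrable lborel h"
      using int[of "-real n" "real n"] unfolding h_def set_integrable_def by (simp add: mult.commute)
    have hA: "set_integrable lborel A h" if "A \<in> sets borel" for A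
      unfolding set_integrable_def using that hi by (intro integrable_mult_indicator) auto
    have hint: "(LINT x|lborel. h x) = 0"
      using z[of "-real n" "real n"] unfolding h_def set_lebesgue_integral_def by (simp add: mult.commute)
    have P: "(LINT x:A|lborel. h x) = 0" if "A \<in> sets borel" for A
      using that
    proof (induction rule: borel_set_induct)
      case empty then show ?case by (simp add: set_lebesgue_integral_def)
    next
      case (interval a b)
      have eq: "(LINT x:{a..b}|lborel. h x) = (LINT x:{a..b} \<inter> {-real n..real n}|lborel. f x)"
        unfolding set_lebesgue_integral_def h_def
        by (intro Bochner_Integration.integral_cong) (auto split: split_indicator)
      show ?case
      proof (cases "max a (-real n) \<le> min b (real n)")
        case True
        have "{a..b} \<inter> {-real n..real n} = {max a (-real n)..min b (real n)}" by auto
        then show ?thesis using eq z[OF True] by simp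
      next
        case False
        then have "{a..b} \<inter> {-real n..real n} = {}" by auto
        then show ?thesis using eq by (simp add: set_lebesgue_integral_def)
      qed
    next
      case (compl A)
      have "(LINT x:-A|lborel. h x) = (LINT x|lborel. h x) - (LINT x:A|lborel. h x)"
      proof -
        have "(LINT x:-A|lborel. h x) = (LINT x|lborel. h x - indicator A x * h x)"
          unfolding set_lebesgue_integral_def
          by (intro Bochner_Integration.integral_cong) (auto split: split_indicator)
        also have "\<dots> = (LINT x|lborel. h x) - (LINT x:A|lborel. h x)"
          using hA[OF compl(1)] hi unfolding set_lebesgue_integral_def set_integrable_def
          by (subst Bochner_Integration.integral_diff) auto
        finally show ?thesis .
      qed
      then show ?case using compl hint by simp
    next
      case (union F)
      have "(LINT x:(\<Union>i. F i)|lborel. h x) = (\<Sum>i. (LINT x:(F i)|lborel. h x))"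
        using union(1,2) hA[of "\<Union>i. F i"]
        by (intro lebesgue_integral_countable_add) (auto simp: disjoint_family_on_def)
      then show ?case using union(3) by simp
    qed
    have "AE x in lborel. h x = (\<lambda>x. 0) x"
      by (rule density_unique_real) (use hi P in auto)
    then show ?thesis unfolding h_def by simp
  qed
  then have "AE x in lborel. \<forall>n::nat. indicator {-real n..real n} x * f x = 0"
    by (subst AE_all_countable) (intro allI, rule AEn)
  then show ?thesis
  proof (rule AE_mp[OF _ AE_I2], intro impI)
    fix x assume H: "\<forall>n::nat. indicator {-real n..real n} x * f x = 0"
    obtain n :: nat where "\<bar>x\<bar> \<le> real n" using real_arch_simple by blast
    then have "x \<in> {-real n..real n}" by auto
    then show "f x = 0" using H[rule_format, of n] by simp
  qed
qed


lemma comp_interval: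
  fixes S C :: "real set"
  assumes S: "open S" "S \<subseteq> {a<..<b}" and C: "C \<in> components S"
  shows "\<exists>c d. c < d \<and> C = {c<..<d} \<and> c \<notin> S \<and> d \<notin> S \<and> a \<le> c \<and> d \<le> b"
proof -
  have Co: "open C" using open_components[OF S(1) C] .
  have Cne: "C \<noteq> {}" using in_components_nonempty[OF C] .
  have CS: "C \<subseteq> S" using in_components_subset[OF C] .
  have Cc: "connected C" using in_components_connected[OF C] .
  have Ci: "is_interval C" using Cc is_interval_connected_1 by blast
  have bb: "bdd_below C" "bdd_above C" using CS S(2) by (auto intro!: bdd_belowI[of _ a] bdd_aboveI[of _ b])
  define c where "c = Inf C"
  define d where "d = Sup C"
  have cle: "c \<le> x" "x \<le> d" if "x \<in> C" for x
    using that bb unfolding c_def d_def by (auto intro: cInf_lower cSup_upper)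
  have cnot: "c \<notin> C"
  proof
    assume "c \<in> C"
    then obtain e where e: "e > 0" "ball c e \<subseteq> C" using Co open_contains_ball by blast
    then have "c - e/2 \<in> C" by (auto simp: dist_real_def)
    then show False using cle[of "c - e/2"] e by auto
  qed
  have dnot: "d \<notin> C"
  proof
    assume "d \<in> C"
    then obtain e where e: "e > 0" "ball d e \<subseteq> C" using Co open_contains_ball by blast
    then have "d + e/2 \<in> C" by (auto simp: dist_real_def)
    then show False using cle[of "d + e/2"] e by auto
  qed
  have Ceq: "C = {c<..<d}"
  proof
    show "C \<subseteq> {c<..<d}" using cle cnot dnot by (force simp: order_le_less)
    show "{c<..<d} \<subseteq> C"
    proof
      fix x assume x: "x \<in> {c<..<d}"
      obtain y where y: "y \<in> C" "y < x" using x Cne bb unfolding c_def by (auto simp: cInf_less_iff)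
      obtain z where z: "z \<in> C" "x < z" using x Cne bb unfolding d_def by (auto simp: less_cSup_iff)
      show "x \<in> C" using Ci y z unfolding is_interval_1 by (meson less_imp_le)
    qed
  qed
  have cd: "c < d"
  proof -
    obtain x where "x \<in> C" using Cne by auto
    then show ?thesis using Ceq by auto
  qed
  have notS: "p \<notin> S" if p: "p \<in> closure C" "p \<notin> C" for p
  proof
    assume pS: "p \<in> S"
    have conn: "connected (insert p C)"
      by (rule connected_intermediate_closure[OF Cc]) (use p closure_subset in auto)
    have mx: "\<forall>D. D \<noteq> {} \<and> C \<subseteq> D \<and> D \<subseteq> S \<and> connected D \<longrightarrow> D = C"
      using C in_components_maximal by blast
    have D: "insert p C \<noteq> {} \<and> C \<subseteq> insert p C \<and> insert p C \<subseteq> S \<and> connected (insert p C)"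
      using pS CS conn by auto
    have "insert p C = C" using mp[OF spec[OF mx, of "insert p C"] D] .
    then show False using p by auto
  qed
  have cl: "c \<in> closure C" "d \<in> closure C" using Ceq cd by auto
  have ab: "a \<le> c" "d \<le> b"
  proof -
    obtain x where x: "x \<in> C" using Cne by auto
    have "C \<subseteq> {a<..<b}" using CS S(2) by auto
    then have "C \<subseteq> {a..b}" by auto
    then have "closure C \<subseteq> {a..b}" by (simp add: closure_minimal)
    then show "a \<le> c" "d \<le> b" using cl by auto
  qed
  show ?thesis using cd Ceq notS[OF cl(1) cnot] notS[OF cl(2) dnot] ab by blast
qed

lemma countable_zero:
  fixes f :: "'a \<Rightarrow> real"
  assumes "countable \<C>" "pairwise disjnt \<C>" "\<And>C. C \<in> \<C> \<Longrightarrow> C \<in> sets M"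
    and "set_integrable M (\<Union>\<C>) f" and "\<And>C. C \<in> \<C> \<Longrightarrow> (LINT x:C|M. f x) = 0"
  shows "(LINT x:(\<Union>\<C>)|M. f x) = 0"
proof -
  define A where "A i = (if i \<in> to_nat_on \<C> ` \<C> then from_nat_into \<C> i else {})" for i
  have Ain: "A i \<in> \<C> \<or> A i = {}" for i
    unfolding A_def using assms(1) by (auto simp: from_nat_into_to_nat_on)
  have UA: "(\<Union>i. A i) = \<Union>\<C>"
  proof
    show "(\<Union>i. A i) \<subseteq> \<Union>\<C>" using Ain by blast
    show "\<Union>\<C> \<subseteq> (\<Union>i. A i)"
    proof
      fix x assume "x \<in> \<Union>\<C>"
      then obtain C where "C \<in> \<C>" "x \<in> C" by auto
      then have "A (to_nat_on \<C> C) = C" unfolding A_def using assms(1) by (auto simp: from_nat_into_to_nat_on)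
      then show "x \<in> (\<Union>i. A i)" using \<open>x \<in> C\<close> by blast
    qed
  qed
  have disj: "A i \<inter> A j = {}" if "i \<noteq> j" for i j
  proof (cases "A i = {} \<or> A j = {}")
    case True then show ?thesis by auto
  next
    case False
    then have "i \<in> to_nat_on \<C> ` \<C>" "j \<in> to_nat_on \<C> ` \<C>" unfolding A_def by (auto split: if_splits)
    then obtain C D where CD: "C \<in> \<C>" "D \<in> \<C>" "i = to_nat_on \<C> C" "j = to_nat_on \<C> D" by auto
    then have "A i = C" "A j = D" unfolding A_def using assms(1) by (auto simp: from_nat_into_to_nat_on)
    moreover have "C \<noteq> D" using CD that by auto
    ultimately show ?thesis using CD assms(2) by (auto simp: pairwise_def disjnt_def)
  qed
  have "(LINT x:(\<Union>i. A i)|M. f x) = (\<Sum>i. (LINT x:(A i)|M. f x))"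
  proof (rule lebesgue_integral_countable_add)
    show "A i \<in> sets M" for i using Ain[of i] assms(3) by (metis sets.empty_sets)
  qed (use assms(4) UA disj in auto)
  also have "\<dots> = 0"
  proof -
    have "(LINT x:(A i)|M. f x) = 0" for i using Ain[of i] assms(5) by (auto simp: set_lebesgue_integral_def)
    then show ?thesis by simp
  qed
  finally show ?thesis using UA by simp
qed

lemma K1:
  fixes g u :: "real \<Rightarrow> real"
  assumes g[measurable]: "g \<in> borel_measurable borel"
    and int: "\<And>a b. a \<le> b \<Longrightarrow> set_integrable lborel {a..b} g"
    and eq: "\<And>a b. a \<le> b \<Longrightarrow> u b - u a = (LINT x:{a..b}|lborel. g x)"
    and G: "open G" and z: "\<And>x. x \<notin> G \<Longrightarrow> u x = 0"
    and ab: "a \<le> b" "a \<notin> G" "b \<notin> G"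
  shows "(LINT x:{a..b} \<inter> -G|lborel. g x) = 0"
proof -
  define S where "S = G \<inter> {a<..<b}"
  have So: "open S" unfolding S_def using G by auto
  have Ssub: "S \<subseteq> {a<..<b}" unfolding S_def by auto
  have Gb[measurable]: "G \<in> sets borel" using G by auto
  have Sb[measurable]: "S \<in> sets borel" using So by auto
  have comp0: "(LINT x:C|lborel. g x) = 0" if C: "C \<in> components S" for C
  proof -
    obtain c d where cd: "c < d" "C = {c<..<d}" "c \<notin> S" "d \<notin> S" "a \<le> c" "d \<le> b"
      using comp_interval[OF So Ssub C] by blast
    have uc: "u c = 0"
    proof (cases "c \<in> G")
      case True
      then have "c = a \<or> c = b" using cd(3,5,6,1) unfolding S_def by auto
      then show ?thesis using z ab by auto
    qed (use z in auto)
    have ud: "u d = 0"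
    proof (cases "d \<in> G")
      case True
      then have "d = a \<or> d = b" using cd(4,5,6,1) unfolding S_def by auto
      then show ?thesis using z ab by auto
    qed (use z in auto)
    have "(LINT x:C|lborel. g x) = (LINT x:{c..d}|lborel. g x)"
    proof (rule set_integral_cong_set)
      show "set_borel_measurable lborel {c..d} g" "set_borel_measurable lborel C g"
        unfolding set_borel_measurable_def cd(2) by measurable
      show "AE x in lborel. (x \<in> {c..d}) = (x \<in> C)"
        using AE_lborel_singleton[of c] AE_lborel_singleton[of d] unfolding cd(2)
        by eventually_elim auto
    qed
    also have "\<dots> = u d - u c" using eq[of c d] cd(1) by simp
    finally show ?thesis using uc ud by simp
  qed
  have Sint: "set_integrable lborel S g"
    using int[OF ab(1)] by (rule set_integrable_subset) (use Ssub in auto)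
  have S0: "(LINT x:S|lborel. g x) = 0"
  proof -
    have cc: "countable (components S)"
    proof (rule countable_disjoint_open_subsets)
      show "open C" if "C \<in> components S" for C using open_components[OF So that] .
      show "disjoint (components S)"
        unfolding pairwise_def disjnt_def using components_nonoverlap by blast
    qed
    have "(LINT x:(\<Union>(components S))|lborel. g x) = 0"
    proof (rule countable_zero[OF cc])
      show "disjoint (components S)"
        unfolding pairwise_def disjnt_def using components_nonoverlap by blast
      show "C \<in> sets lborel" if "C \<in> components S" for C
        using open_components[OF So that] by auto
      show "set_integrable lborel (\<Union> (components S)) g" using Sint by simp
    qed (use comp0 in auto)
    then show ?thesis by simp
  qed
  have Fint: "set_integrable lborel ({a..b} \<inter> -G) g"
    using int[OF ab(1)] by (rule set_integrable_subset) auto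
  have split: "{a..b} = S \<union> ({a..b} \<inter> -G)" unfolding S_def using ab by (auto simp: order_le_less)
  have "u b - u a = (LINT x:S|lborel. g x) + (LINT x:{a..b} \<inter> -G|lborel. g x)"
    using eq[OF ab(1)] split set_integral_Un[of S "{a..b} \<inter> -G" lborel g, OF _ Sint Fint]
    unfolding S_def by auto
  then show ?thesis using S0 z ab by simp
qed

lemma K:
  fixes g u :: "real \<Rightarrow> real"
  assumes g[measurable]: "g \<in> borel_measurable borel"
    and int: "\<And>a b. a \<le> b \<Longrightarrow> set_integrable lborel {a..b} g"
    and eq: "\<And>a b. a \<le> b \<Longrightarrow> u b - u a = (LINT x:{a..b}|lborel. g x)"
    and G: "open G" and z: "\<And>x. x \<notin> G \<Longrightarrow> u x = 0"
  shows "(LINT x:{a..b} \<inter> -G|lborel. g x) = 0"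
proof (cases "{a..b} \<inter> -G = {}")
  case True then show ?thesis by (simp add: set_lebesgue_integral_def)
next
  case False
  define T where "T = {a..b} \<inter> -G"
  have Tc: "closed T" unfolding T_def using G by (auto intro: closed_Int)
  have Tb: "bdd_below T" "bdd_above T" unfolding T_def by (auto intro: bdd_belowI[of _ a] bdd_aboveI[of _ b])
  have Tne: "T \<noteq> {}" using False unfolding T_def .
  define a' where "a' = Inf T"
  define b' where "b' = Sup T"
  have a'T: "a' \<in> T" unfolding a'_def by (rule closed_contains_Inf[OF Tne Tb(1) Tc])
  have b'T: "b' \<in> T" unfolding b'_def by (rule closed_contains_Sup[OF Tne Tb(2) Tc])
  have le: "a' \<le> x" "x \<le> b'" if "x \<in> T" for x
    using that Tb unfolding a'_def b'_def by (auto intro: cInf_lower cSup_upper)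
  have "T = {a'..b'} \<inter> -G"
    using le a'T b'T unfolding T_def by auto
  moreover have "(LINT x:{a'..b'} \<inter> -G|lborel. g x) = 0"
    by (rule K1[OF g int eq G z]) (use a'T b'T le in \<open>auto simp: T_def\<close>)
  ultimately show ?thesis unfolding T_def by simp
qed


lemma borel_lebesgue: "g \<in> borel_measurable borel \<Longrightarrow> g \<in> borel_measurable lebesgue"
  by (rule measurable_completion) simp

lemma wd_borel:
  assumes "weak_deriv u h"
  shows "\<exists>g. g \<in> borel_measurable borel \<and> (AE x in lborel. h x = g x) \<and>
    integrable lborel (\<lambda>x. (g x)\<^sup>2) \<and>
    (\<forall>a b. a \<le> b \<longrightarrow> set_integrable lborel {a..b} g \<and> u b - u a = (LINT x:{a..b}|lborel. g x))"
proof -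
  have hm: "h \<in> borel_measurable lebesgue" and hi: "integrable lebesgue (\<lambda>x. (h x)\<^sup>2)"
    and hab: "\<And>a b. a \<le> b \<Longrightarrow> set_integrable lebesgue {a..b} h \<and> u b - u a = (LINT x:{a..b}|lebesgue. h x)"
    using assms unfolding weak_deriv_def L2_def by auto
  obtain g where gb: "g \<in> borel_measurable lborel" and ae: "AE x in lborel. h x = g x"
    using completion_ex_borel_measurable_real[OF hm] by blast
  have gb'[measurable]: "g \<in> borel_measurable borel" using gb by simp
  have aeL: "AE x in lebesgue. h x = g x" using ae by (rule AE_completion)
  have "integrable lebesgue (\<lambda>x. (g x)\<^sup>2)"
    using hi by (rule integrable_cong_AE_imp) (use aeL in \<open>auto elim!: AE_mp intro!: borel_lebesgue\<close>)
  then have gi: "integrable lborel (\<lambda>x. (g x)\<^sup>2)" by (subst integrable_completion[symmetric]) auto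
  have gab: "set_integrable lborel {a..b} g \<and> u b - u a = (LINT x:{a..b}|lborel. g x)" if "a \<le> b" for a b
  proof -
    have 1: "set_integrable lebesgue {a..b} g"
      using conjunct1[OF hab[OF that]] unfolding set_integrable_def
      by (rule integrable_cong_AE_imp) (use aeL in \<open>auto elim!: AE_mp intro!: borel_lebesgue\<close>)
    have 2: "(LINT x:{a..b}|lebesgue. h x) = (LINT x:{a..b}|lebesgue. g x)"
      unfolding set_lebesgue_integral_def
    proof (rule integral_cong_AE)
      have ib: "(\<lambda>x. indicator {a..b} x :: real) \<in> borel_measurable lebesgue"
        by (rule borel_lebesgue) simp
      show "(\<lambda>x. indicat_real {a..b} x *\<^sub>R h x) \<in> borel_measurable lebesgue"
        using ib hm by simp
      show "(\<lambda>x. indicat_real {a..b} x *\<^sub>R g x) \<in> borel_measurable lebesgue"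
        by (rule borel_lebesgue) simp
    qed (use aeL in \<open>auto elim!: AE_mp\<close>)
    have 3: "(LINT x:{a..b}|lebesgue. g x) = (LINT x:{a..b}|lborel. g x)"
      unfolding set_lebesgue_integral_def by (rule integral_completion) simp
    have 4: "set_integrable lborel {a..b} g"
      using 1 unfolding set_integrable_def by (subst integrable_completion[symmetric]) auto
    show ?thesis using hab[OF that] 2 3 4 by simp
  qed
  show ?thesis using gb' ae gi gab by blast
qed

lemma wd_of_borel:
  assumes gb[measurable]: "g \<in> borel_measurable borel" and gi: "integrable lborel (\<lambda>x. (g x)\<^sup>2)"
    and gab1: "\<And>a b. a \<le> b \<Longrightarrow> set_integrable lborel {a..b} g"
    and gab2: "\<And>a b. a \<le> b \<Longrightarrow> u b - u a = (LINT x:{a..b}|lborel. g x)"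
  shows "weak_deriv u g"
  unfolding weak_deriv_def L2_def
proof (intro conjI allI impI)
  show "g \<in> borel_measurable lebesgue" by (rule borel_lebesgue) simp
  show "integrable lebesgue (\<lambda>x. (g x)\<^sup>2)" using gi by (subst integrable_completion) auto
  fix a b :: real assume ab: "a \<le> b"
  show "set_integrable lebesgue {a..b} g"
    using gab1[OF ab] unfolding set_integrable_def by (subst integrable_completion) auto
  show "u b - u a = (LINT x:{a..b}|lebesgue. g x)"
    using gab2[OF ab] unfolding set_lebesgue_integral_def by (subst integral_completion) auto
qed

lemma imi: "A \<in> sets M \<Longrightarrow> integrable M f \<Longrightarrow> integrable M (\<lambda>x. indicator A x * f x :: real)"
  using integrable_mult_indicator[of A M f] by simp

lemma ieq: "integrable M f \<Longrightarrow> (\<And>x. f x = g x) \<Longrightarrow> integrable M g"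
proof -
  assume "integrable M f" "\<And>x. f x = g x"
  moreover have "f = g" using \<open>\<And>x. f x = g x\<close> by (rule ext)
  ultimately show "integrable M g" by simp
qed

lemma wd_unique:
  assumes "weak_deriv u h1" "weak_deriv u h2"
  shows "AE x in lebesgue. h1 x = h2 x"
proof -
  obtain g1 where g1: "g1 \<in> borel_measurable borel" "AE x in lborel. h1 x = g1 x"
    "\<forall>a b. a \<le> b \<longrightarrow> set_integrable lborel {a..b} g1 \<and> u b - u a = (LINT x:{a..b}|lborel. g1 x)"
    using wd_borel[OF assms(1)] by blast
  obtain g2 where g2: "g2 \<in> borel_measurable borel" "AE x in lborel. h2 x = g2 x"
    "\<forall>a b. a \<le> b \<longrightarrow> set_integrable lborel {a..b} g2 \<and> u b - u a = (LINT x:{a..b}|lborel. g2 x)"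
    using wd_borel[OF assms(2)] by blast
  have "AE x in lborel. g1 x - g2 x = 0"
  proof (rule U)
    show "(\<lambda>x. g1 x - g2 x) \<in> borel_measurable borel" using g1(1) g2(1) by measurable
    fix a b :: real assume ab: "a \<le> b"
    show "set_integrable lborel {a..b} (\<lambda>x. g1 x - g2 x)"
      using g1(3) g2(3) ab by (intro set_integral_diff) auto
    show "(LINT x:{a..b}|lborel. g1 x - g2 x) = 0"
      using g1(3) g2(3) ab by (subst set_integral_diff) auto
  qed
  then have "AE x in lborel. h1 x = h2 x" using g1(2) g2(2) by eventually_elim auto
  then show ?thesis by (rule AE_completion)
qed

theorem mainTheorem2:
  fixes s :: "real \<Rightarrow> real" and G :: "real set"
  assumes "strict_mono s"
    and "\<And>a b. a \<le> b \<Longrightarrow> s b - s a = measure lebesgue ({a..b} \<inter> G)"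
    and "open G"
    and "emeasure lebesgue (- G) > 0"
    and "\<And>x. x \<in> - G \<Longrightarrow> x islimpt (- G)"
  shows "Fs_part s G = H10 G \<and>
         (\<forall>u \<in> Fs_part s G. \<forall>v \<in> Fs_part s G. Es s u v = 1/2 * Dform u v)"
proof -
  have Gb[measurable]: "G \<in> sets borel" using assms(3) by auto
  note IMeq = IM[OF assms(1,2,3)]
  have indb[measurable]: "(\<lambda>x. indicator G x :: real) \<in> borel_measurable borel" by measurable
  have intN: "integrable (interval_measure s) f \<longleftrightarrow> integrable lborel (\<lambda>x. indicator G x * f x)"
    if [measurable]: "f \<in> borel_measurable borel" for f :: "real \<Rightarrow> real"
    using integrable_density[of f lborel "\<lambda>x. indicator G x"] IMeq by simp
  have integN: "integral\<^sup>L (interval_measure s) f = (LINT x|lborel. indicator G x * f x)"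
    if [measurable]: "f \<in> borel_measurable borel" for f :: "real \<Rightarrow> real"
    using integral_density[of f lborel "\<lambda>x. indicator G x"] IMeq by simp
  have A: "weak_deriv u (\<lambda>x. indicator G x * g x)" if sd: "s_deriv s u g" for u g
  proof (rule wd_of_borel)
    have gb[measurable]: "g \<in> borel_measurable borel" using sd unfolding s_deriv_def by auto
    show "(\<lambda>x. indicator G x * g x) \<in> borel_measurable borel" by measurable
    have "integrable lborel (\<lambda>x. indicator G x * (g x)\<^sup>2)"
      using sd unfolding s_deriv_def by (subst intN[symmetric]) auto
    then show "integrable lborel (\<lambda>x. (indicator G x * g x)\<^sup>2)"
      by (rule ieq) (auto simp: power2_eq_square split: split_indicator)
    fix a b :: real assume ab: "a \<le> b"
    have "set_integrable (interval_measure s) {a - 1<..b} g" using sd ab unfolding s_deriv_def by auto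
    then have "integrable lborel (\<lambda>x. indicator G x * (indicator {a - 1<..b} x * g x))"
      unfolding set_integrable_def by (subst intN[symmetric]) auto
    then have "integrable lborel (\<lambda>x. indicator {a..b} x * (indicator G x * (indicator {a - 1<..b} x * g x)))"
      using imi[of "{a..b}" lborel] by simp
    then show "set_integrable lborel {a..b} (\<lambda>x. indicator G x * g x)"
      unfolding set_integrable_def
      by (rule ieq) (auto split: split_indicator)
    have "u b - u a = (LINT x:{a<..b}|interval_measure s. g x)" using sd ab unfolding s_deriv_def by auto
    also have "\<dots> = (LINT x|lborel. indicator G x * (indicator {a<..b} x * g x))"
      unfolding set_lebesgue_integral_def by (subst integN) auto
    also have "\<dots> = (LINT x:{a<..b}|lborel. indicator G x * g x)"
      unfolding set_lebesgue_integral_def by (intro Bochner_Integration.integral_cong) auto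
    also have "\<dots> = (LINT x:{a..b}|lborel. indicator G x * g x)"
    proof (rule set_integral_cong_set)
      show "set_borel_measurable lborel {a..b} (\<lambda>x. indicator G x * g x)"
        "set_borel_measurable lborel {a<..b} (\<lambda>x. indicator G x * g x)"
        unfolding set_borel_measurable_def by measurable
      show "AE x in lborel. (x \<in> {a..b}) = (x \<in> {a<..b})"
        using AE_lborel_singleton[of a] by eventually_elim (use ab in auto)
    qed
    finally show "u b - u a = (LINT x:{a..b}|lborel. indicator G x * g x)" .
  qed
  have B: "\<exists>g. s_deriv s u g" if wd: "weak_deriv u h" and z: "\<And>x. x \<notin> G \<Longrightarrow> u x = 0" for u h
  proof -
    obtain g where gb[measurable]: "g \<in> borel_measurable borel" and gi: "integrable lborel (\<lambda>x. (g x)\<^sup>2)"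
      and gab: "\<And>a b. a \<le> b \<Longrightarrow> set_integrable lborel {a..b} g \<and> u b - u a = (LINT x:{a..b}|lborel. g x)"
      using wd_borel[OF wd] by blast
    have K0: "(LINT x:{a..b} \<inter> -G|lborel. g x) = 0" for a b
      by (rule K[OF gb _ _ assms(3) z]) (use gab in auto)
    have "s_deriv s u g"
      unfolding s_deriv_def
    proof (intro conjI allI impI)
      show "g \<in> borel_measurable borel" by simp
      show "integrable (interval_measure s) (\<lambda>x. (g x)\<^sup>2)"
        by (subst intN) (use gi imi[of G lborel] in auto)
      fix a b :: real assume ab: "a \<le> b"
      have "integrable lborel (\<lambda>x. indicator (G \<inter> {a<..b}) x * (indicator {a..b} x * g x))"
        using gab[OF ab] imi[of "G \<inter> {a<..b}" lborel] unfolding set_integrable_def by simp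
      then have "integrable lborel (\<lambda>x. indicator G x * (indicator {a<..b} x * g x))"
        by (rule ieq) (auto split: split_indicator)
      then show "set_integrable (interval_measure s) {a<..b} g"
        unfolding set_integrable_def by (subst intN) auto
      have Iab: "set_integrable lborel {a..b} g" using gab[OF ab] by simp
      have "u b - u a = (LINT x:{a..b}|lborel. g x)" using gab[OF ab] by simp
      also have "\<dots> = (LINT x:{a..b} \<inter> G|lborel. g x) + (LINT x:{a..b} \<inter> -G|lborel. g x)"
      proof -
        have "{a..b} = ({a..b} \<inter> G) \<union> ({a..b} \<inter> -G)" by auto
        moreover have "set_integrable lborel ({a..b} \<inter> G) g" "set_integrable lborel ({a..b} \<inter> -G) g"
          using Iab by (auto intro: set_integrable_subset)
        ultimately show ?thesis using set_integral_Un[of "{a..b} \<inter> G" "{a..b} \<inter> -G" lborel g] by auto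
      qed
      also have "\<dots> = (LINT x:{a..b} \<inter> G|lborel. g x)" using K0 by simp
      also have "\<dots> = (LINT x:{a<..b} \<inter> G|lborel. g x)"
      proof (rule set_integral_cong_set)
        show "set_borel_measurable lborel ({a..b} \<inter> G) g" "set_borel_measurable lborel ({a<..b} \<inter> G) g"
          unfolding set_borel_measurable_def by measurable
        show "AE x in lborel. (x \<in> {a<..b} \<inter> G) = (x \<in> {a..b} \<inter> G)"
          using AE_lborel_singleton[of a] by eventually_elim (use ab in auto)
      qed
      also have "\<dots> = (LINT x|lborel. indicator G x * (indicator {a<..b} x * g x))"
        unfolding set_lebesgue_integral_def
        by (intro Bochner_Integration.integral_cong) (auto split: split_indicator)
      also have "\<dots> = (LINT x:{a<..b}|interval_measure s. g x)"
        unfolding set_lebesgue_integral_def by (subst integN) auto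
      finally show "u b - u a = (LINT x:{a<..b}|interval_measure s. g x)" .
    qed
    then show ?thesis by blast
  qed
  have eqset: "Fs_part s G = H10 G"
  proof
    show "Fs_part s G \<subseteq> H10 G"
      unfolding Fs_part_def H10_def Fs_def H1_def using A by blast
    show "H10 G \<subseteq> Fs_part s G"
      unfolding Fs_part_def H10_def Fs_def H1_def using B by blast
  qed
  have C: "Es s u v = 1/2 * Dform u v" if u: "u \<in> Fs_part s G" and v: "v \<in> Fs_part s G" for u v
  proof -
    define gu where "gu = (SOME g. s_deriv s u g)"
    define gv where "gv = (SOME g. s_deriv s v g)"
    define hu where "hu = (SOME g. weak_deriv u g)"
    define hv where "hv = (SOME g. weak_deriv v g)"
    have "\<exists>g. s_deriv s u g" using u unfolding Fs_part_def Fs_def by auto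
    then have sgu: "s_deriv s u gu" unfolding gu_def by (rule someI_ex)
    have "\<exists>g. s_deriv s v g" using v unfolding Fs_part_def Fs_def by auto
    then have sgv: "s_deriv s v gv" unfolding gv_def by (rule someI_ex)
    have "\<exists>g. weak_deriv u g" using A[OF sgu] by blast
    then have whu: "weak_deriv u hu" unfolding hu_def by (rule someI_ex)
    have "\<exists>g. weak_deriv v g" using A[OF sgv] by blast
    then have whv: "weak_deriv v hv" unfolding hv_def by (rule someI_ex)
    have aeu: "AE x in lebesgue. hu x = indicator G x * gu x" using wd_unique[OF whu A[OF sgu]] .
    have aev: "AE x in lebesgue. hv x = indicator G x * gv x" using wd_unique[OF whv A[OF sgv]] .
    have gub[measurable]: "gu \<in> borel_measurable borel" using sgu unfolding s_deriv_def by auto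
    have gvb[measurable]: "gv \<in> borel_measurable borel" using sgv unfolding s_deriv_def by auto
    have hum: "hu \<in> borel_measurable lebesgue" using whu unfolding weak_deriv_def L2_def by auto
    have hvm: "hv \<in> borel_measurable lebesgue" using whv unfolding weak_deriv_def L2_def by auto
    have "Es s u v = 1/2 * (LINT x|interval_measure s. gu x * gv x)"
      unfolding Es_def gu_def gv_def by simp
    also have "(LINT x|interval_measure s. gu x * gv x) = (LINT x|lborel. indicator G x * (gu x * gv x))"
      by (subst integN) auto
    also have "\<dots> = (LINT x|lebesgue. indicator G x * (gu x * gv x))"
      by (rule integral_completion[symmetric]) simp
    also have "\<dots> = (LINT x|lebesgue. hu x * hv x)"
    proof (rule integral_cong_AE)
      show "(\<lambda>x. indicator G x * (gu x * gv x)) \<in> borel_measurable lebesgue"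
        by (rule borel_lebesgue) simp
      show "(\<lambda>x. hu x * hv x) \<in> borel_measurable lebesgue" using hum hvm by simp
      show "AE x in lebesgue. indicator G x * (gu x * gv x) = hu x * hv x"
        using aeu aev by eventually_elim (auto split: split_indicator)
    qed
    also have "\<dots> = Dform u v" unfolding Dform_def hu_def hv_def by simp
    finally show ?thesis .
  qed
  show ?thesis using eqset C by blast
qed

end
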